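(* Let $(\mu,\nu)\in\boldsymbol{\mathcal P}$ and consider the RRU with initial composition $(x,y)\in\mathbb S$, $D_0=x+y$. Let $Z_n=Z_0+M_n+A_n$ be the Doob decomposition of $Z_n$ with respect to $\{\mathcal A_n\}$. If $D_0\ge2\beta$, then $$\mathbb E\big(\sup_r|A_r|\big)\le\frac{\beta}{D_0}.$$
   Context: Fix $0<m_0\le\beta<\infty$. $\boldsymbol{\mathcal P}$: pairs $(\mu,\nu)$ of probability measures on $[0,\beta]$ with $\int k\,\mu(dk)=\int k\,\nu(dk)\ge m_0$. $\mathbb S=[0,\infty)^2\setminus\{(0,0)\}$. RRU: with $\{U_n\}$ i.i.d. uniform$[0,1]$ independent of i.i.d. $\{(V_n,W_n)\}$ with uniform$[0,1]$ marginals, $R_X(n)=q_\mu(V_n)$, $R_Y(n)=q_\nu(W_n)$, $X_0=x,Y_0=y$, $X_{n+1}=X_n+R_X(n+1)\mathbb I(n+1)$, $Y_{n+1}=Y_n+R_Y(n+1)(1-\mathbb I(n+1))$, $\mathbb I(n+1)=\mathbf 1\{U_{n+1}\le X_n/(X_n+Y_n)\}$; $D_n=X_n+Y_n$, $Z_n=X_n/D_n$; $\mathcal A_n=\sigma(\mathbb I(j),R_X(j),R_Y(j):j\le n)$ ($\mathcal A_0$ trivial). Doob decomposition: $\{M_n\}$ is a zero-mean $\{\mathcal A_n\}$-martingale with $M_0=0$ and $\{A_n\}$ is a predictable process with $A_0=0$. *)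

theory Defs
  imports "HOL-Probability.Probability"
begin

text \<open>For u in (0,1] this is the usual
  left-continuous inverse of the distribution function; for u = 0 it gives 0.\<close>
definition quantile :: "real measure \<Rightarrow> real \<Rightarrow> real" where
  "quantile \<mu> u = Inf {k::real. 0 \<le> k \<and> u \<le> measure \<mu> {..k}}"

definition pair_class :: "real \<Rightarrow> real \<Rightarrow> real measure \<Rightarrow> real measure \<Rightarrow> bool" where
  "pair_class m0 \<beta> \<mu> \<nu> \<longleftrightarrow>
     prob_space \<mu> \<and> sets \<mu> = sets borel \<and> measure \<mu> {0..\<beta>} = 1 \<and>
     prob_space \<nu> \<and> sets \<nu> = sets borel \<and> measure \<nu> {0..\<beta>} = 1 \<and>
     (\<integral>k. k \<partial>\<mu>) = (\<integral>k. k \<partial>\<nu>) \<and> (\<integral>k. k \<partial>\<mu>) \<ge> m0"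

text \<open>Path of the randomly reinforced urn (X_n, Y_n), given the sample values
  u n = U_n, rx n = R_X(n), ry n = R_Y(n) (indices n >= 1 are used).\<close>
primrec rru :: "real \<Rightarrow> real \<Rightarrow> (nat \<Rightarrow> real) \<Rightarrow> (nat \<Rightarrow> real) \<Rightarrow> (nat \<Rightarrow> real) \<Rightarrow> nat \<Rightarrow> real \<times> real" where
  "rru x y u rx ry 0 = (x, y)"
| "rru x y u rx ry (Suc n) =
     (let X = fst (rru x y u rx ry n); Y = snd (rru x y u rx ry n);
          I = (u (Suc n) \<le> X / (X + Y))
      in (if I then X + rx (Suc n) else X, if I then Y else Y + ry (Suc n)))"

definition rru_ind :: "real \<Rightarrow> real \<Rightarrow> (nat \<Rightarrow> real) \<Rightarrow> (nat \<Rightarrow> real) \<Rightarrow> (nat \<Rightarrow> real) \<Rightarrow> nat \<Rightarrow> real" where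
  "rru_ind x y u rx ry n =
     (case n of 0 \<Rightarrow> 0
      | Suc m \<Rightarrow> (let X = fst (rru x y u rx ry m); Y = snd (rru x y u rx ry m)
                  in if u (Suc m) \<le> X / (X + Y) then 1 else 0))"

text \<open>The RRU path at outcome omega, with R_X(j) = q_mu(V_j), R_Y(j) = q_nu(W_j).\<close>
definition rru_path :: "real measure \<Rightarrow> real measure \<Rightarrow> real \<Rightarrow> real \<Rightarrow> (nat \<Rightarrow> 'a \<Rightarrow> real) \<Rightarrow>
    (nat \<Rightarrow> 'a \<Rightarrow> real) \<Rightarrow> (nat \<Rightarrow> 'a \<Rightarrow> real) \<Rightarrow> nat \<Rightarrow> 'a \<Rightarrow> real \<times> real" where
  "rru_path \<mu> \<nu> x y U V W n \<omega> =
     rru x y (\<lambda>j. U j \<omega>) (\<lambda>j. quantile \<mu> (V j \<omega>)) (\<lambda>j. quantile \<nu> (W j \<omega>)) n"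

definition rru_indicator :: "real measure \<Rightarrow> real measure \<Rightarrow> real \<Rightarrow> real \<Rightarrow> (nat \<Rightarrow> 'a \<Rightarrow> real) \<Rightarrow>
    (nat \<Rightarrow> 'a \<Rightarrow> real) \<Rightarrow> (nat \<Rightarrow> 'a \<Rightarrow> real) \<Rightarrow> nat \<Rightarrow> 'a \<Rightarrow> real" where
  "rru_indicator \<mu> \<nu> x y U V W n \<omega> =
     rru_ind x y (\<lambda>j. U j \<omega>) (\<lambda>j. quantile \<mu> (V j \<omega>)) (\<lambda>j. quantile \<nu> (W j \<omega>)) n"

definition gen_filtration :: "'a measure \<Rightarrow> (nat \<Rightarrow> 'a \<Rightarrow> real) set \<Rightarrow> nat \<Rightarrow> 'a measure" where
  "gen_filtration M fs n =
     sigma (space M) (\<Union>j\<in>{1..n}. \<Union>f\<in>fs. {f j -` B \<inter> space M | B. B \<in> sets borel})"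

definition martingale_wrt :: "'a measure \<Rightarrow> (nat \<Rightarrow> 'a measure) \<Rightarrow> (nat \<Rightarrow> 'a \<Rightarrow> real) \<Rightarrow> bool" where
  "martingale_wrt M F X \<longleftrightarrow>
     (\<forall>n. integrable M (X n) \<and> X n \<in> borel_measurable (F n) \<and>
          (AE \<omega> in M. real_cond_exp M (F n) (X (Suc n)) \<omega> = X n \<omega>))"

definition predictable_wrt :: "(nat \<Rightarrow> 'a measure) \<Rightarrow> (nat \<Rightarrow> 'a \<Rightarrow> real) \<Rightarrow> bool" where
  "predictable_wrt F A \<longleftrightarrow> (\<forall>n. A (Suc n) \<in> borel_measurable (F n))"

end

theory Submission
  imports Defs
begin


lemma quantile_set_props:
  assumes "prob_space \<mu>" "sets \<mu> = sets borel" "measure \<mu> {0..\<beta>} = 1" "u \<le> 1"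
  shows "\<beta> \<in> {k::real. 0 \<le> k \<and> u \<le> measure \<mu> {..k}}"
proof -
  interpret prob_space \<mu> by fact
  have "{0..\<beta>} \<noteq> {}" using assms(3) by (metis measure_empty zero_neq_one)
  then have b0: "0 \<le> \<beta>" by auto
  have "measure \<mu> {0..\<beta>} \<le> measure \<mu> {..\<beta>}"
    by (rule finite_measure_mono) (auto simp: assms(2))
  with assms show ?thesis using b0 by auto
qed

lemma quantile_bounds:
  assumes "prob_space \<mu>" "sets \<mu> = sets borel" "measure \<mu> {0..\<beta>} = 1" "u \<le> 1"
  shows "0 \<le> quantile \<mu> u" "quantile \<mu> u \<le> \<beta>"
proof -
  let ?S = "{k::real. 0 \<le> k \<and> u \<le> measure \<mu> {..k}}"
  have b: "\<beta> \<in> ?S" by (rule quantile_set_props[OF assms])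
  have bd: "bdd_below ?S" by (rule bdd_belowI[of _ 0]) auto
  show "0 \<le> quantile \<mu> u" unfolding quantile_def
    by (rule cInf_greatest) (use b in auto)
  show "quantile \<mu> u \<le> \<beta>" unfolding quantile_def
    by (rule cInf_lower[OF b bd])
qed

lemma quantile_mono_on:
  assumes "prob_space \<mu>" "sets \<mu> = sets borel" "measure \<mu> {0..\<beta>} = 1"
  shows "mono_on {..1} (quantile \<mu>)"
proof (rule mono_onI)
  fix r s :: real assume rs: "r \<in> {..1}" "s \<in> {..1}" "r \<le> s"
  let ?S = "\<lambda>u. {k::real. 0 \<le> k \<and> u \<le> measure \<mu> {..k}}"
  have "\<beta> \<in> ?S s" using quantile_set_props[OF assms] rs by auto
  moreover have "bdd_below (?S r)" by (rule bdd_belowI[of _ 0]) auto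
  moreover have "?S s \<subseteq> ?S r" using rs by auto
  ultimately show "quantile \<mu> r \<le> quantile \<mu> s" unfolding quantile_def
    by (intro cInf_superset_mono) auto
qed

lemma quantile_measurable[measurable]:
  assumes "prob_space \<mu>" "sets \<mu> = sets borel" "measure \<mu> {0..\<beta>} = 1"
  shows "quantile \<mu> \<in> borel_measurable borel"
proof (rule borel_measurable_piecewise_mono[of "{{..1}, {1<..}}"])
  interpret prob_space \<mu> by fact
  show "mono_on c (quantile \<mu>)" if "c \<in> {{..1}, {1<..}}" for c
  proof -
    { fix u :: real assume "1 < u"
      then have "{k::real. 0 \<le> k \<and> u \<le> measure \<mu> {..k}} = {}"
        using prob_le_1 by (smt (verit, best) Collect_empty_eq)
      then have "quantile \<mu> u = Inf {}" unfolding quantile_def by (simp only:) }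
    then have "mono_on {1<..} (quantile \<mu>)" by (auto intro!: mono_onI)
    then show ?thesis using that quantile_mono_on[OF assms] by auto
  qed
qed auto

lemma quantile_distr:
  assumes "prob_space \<mu>" "sets \<mu> = sets borel" "measure \<mu> {0..\<beta>} = 1"
  shows "distr (uniform_measure lborel {0..1}) borel (quantile \<mu>) = \<mu>"
proof -
  interpret prob_space \<mu> by fact
  have rd: "real_distribution \<mu>" unfolding real_distribution_def real_distribution_axioms_def
    using assms by auto
  interpret C: cdf_distribution \<mu> unfolding cdf_distribution_def by (rule rd)
  have qm[measurable]: "quantile \<mu> \<in> borel_measurable borel" by (rule quantile_measurable[OF assms])
  let ?U = "uniform_measure lborel {0..1::real}"
  interpret U: prob_space ?U by (rule prob_space_uniform_measure) auto
  have neg0: "measure \<mu> {..k} = 0" if "k < 0" for k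
  proof -
    have "measure \<mu> {..k} \<le> measure \<mu> (UNIV - {0..\<beta>})"
      by (rule finite_measure_mono) (use that in \<open>auto simp: assms(2)\<close>)
    also have "\<dots> = 0" using prob_compl[of "{0..\<beta>}"] assms
      by (simp add: Compl_eq_Diff_UNIV[symmetric] assms(2))
    finally show ?thesis using measure_nonneg[of \<mu> "{..k}"] by linarith
  qed
  have QI: "quantile \<mu> u = C.I u" if "0 < u" for u
  proof -
    have "{k. 0 \<le> k \<and> u \<le> measure \<mu> {..k}} = {x. u \<le> cdf \<mu> x}"
    proof (intro Collect_cong iffI)
      fix k assume "u \<le> cdf \<mu> k"
      then have "\<not> k < 0" using neg0[of k] that by (auto simp: cdf_def)
      then show "0 \<le> k \<and> u \<le> measure \<mu> {..k}" using \<open>u \<le> cdf \<mu> k\<close> by (auto simp: cdf_def)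
    qed (auto simp: cdf_def)
    then show ?thesis unfolding quantile_def by simp
  qed
  show ?thesis
  proof (rule cdf_unique)
    show "real_distribution (distr ?U borel (quantile \<mu>))"
      by (rule U.real_distribution_distr) simp
    show "real_distribution \<mu>" by (rule rd)
    show "cdf (distr ?U borel (quantile \<mu>)) = cdf \<mu>"
    proof
      fix x
      have "cdf (distr ?U borel (quantile \<mu>)) x = measure ?U (quantile \<mu> -` {..x})"
        unfolding cdf_def by (subst measure_distr) auto
      also have "\<dots> = measure lborel ({0..1} \<inter> quantile \<mu> -` {..x})"
      proof -
        have "quantile \<mu> -` {..x} \<in> sets borel"
          using measurable_sets_borel[OF qm, of "{..x}"] by simp
        then show ?thesis by (subst measure_uniform_measure) auto
      qed
      also have "\<dots> = measure lborel {0<..cdf \<mu> x}"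
      proof (rule measure_eq_AE)
        show "AE u in lborel. (u \<in> {0..1} \<inter> quantile \<mu> -` {..x}) = (u \<in> {0<..cdf \<mu> x})"
          using AE_lborel_singleton[of "0::real"] AE_lborel_singleton[of "1::real"]
        proof eventually_elim
          case (elim u)
          show ?case
          proof (cases "0 < u \<and> u < 1")
            case True
            then have "u \<le> cdf \<mu> x \<longleftrightarrow> C.I u \<le> x" by (intro C.pseudoinverse) auto
            then show ?thesis using True QI[of u] by auto
          next
            case False
            then show ?thesis using elim C.cdf_bounded_prob[of x] by auto
          qed
        qed
      qed auto
      also have "\<dots> = cdf \<mu> x" using C.cdf_nonneg[of x] by simp
      finally show "cdf (distr ?U borel (quantile \<mu>)) x = cdf \<mu> x" .
    qed
  qed
qed



lemma (in prob_space) indep_fubini: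
  fixes f :: "_ \<Rightarrow> real"
  assumes ind: "indep_var S X T Y"
    and f[measurable]: "f \<in> borel_measurable (S \<Otimes>\<^sub>M T)"
    and int: "integrable M (\<lambda>\<omega>. f (X \<omega>, Y \<omega>))"
  shows "(\<integral>\<omega>. f (X \<omega>, Y \<omega>) \<partial>M) = (\<integral>\<omega>. (\<integral>\<omega>'. f (X \<omega>, Y \<omega>') \<partial>M) \<partial>M)"
    and "integrable M (\<lambda>\<omega>. (\<integral>\<omega>'. f (X \<omega>, Y \<omega>') \<partial>M))"
proof -
  have rvX[measurable]: "X \<in> measurable M S" and rvY[measurable]: "Y \<in> measurable M T"
    and eq: "distr M S X \<Otimes>\<^sub>M distr M T Y = distr M (S \<Otimes>\<^sub>M T) (\<lambda>x. (X x, Y x))"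
    using ind unfolding indep_var_distribution_eq by auto
  interpret PX: prob_space "distr M S X" by (rule prob_space_distr) simp
  interpret PY: prob_space "distr M T Y" by (rule prob_space_distr) simp
  interpret P: pair_sigma_finite "distr M S X" "distr M T Y" ..
  have intP: "integrable (distr M S X \<Otimes>\<^sub>M distr M T Y) f"
    unfolding eq using int integrable_distr_eq[of "\<lambda>x. (X x, Y x)" M "S \<Otimes>\<^sub>M T" f]
      measurable_Pair[OF rvX rvY] by simp
  have m2: "(\<lambda>s. \<integral>t. f (s, t) \<partial>distr M T Y) \<in> borel_measurable S"
  proof -
    have "(\<lambda>s. \<integral>t. f (s, t) \<partial>distr M T Y) \<in> borel_measurable (distr M S X)"
    proof (rule PY.borel_measurable_lebesgue_integral)
      have se: "sets (distr M S X \<Otimes>\<^sub>M distr M T Y) = sets (S \<Otimes>\<^sub>M T)"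
        by (rule sets_pair_measure_cong) simp_all
      have "f \<in> borel_measurable (distr M S X \<Otimes>\<^sub>M distr M T Y)"
        using f measurable_cong_sets[OF se refl] by blast
      then show "case_prod (\<lambda>s t. f (s, t)) \<in> borel_measurable (distr M S X \<Otimes>\<^sub>M distr M T Y)"
        by simp
    qed
    then show ?thesis using measurable_cong_sets[of "distr M S X" S borel borel] by simp
  qed
  have inner: "(\<integral>t. f (s, t) \<partial>distr M T Y) = (\<integral>\<omega>'. f (s, Y \<omega>') \<partial>M)" if "s \<in> space S" for s
    using that by (intro integral_distr rvY) simp
  have "(\<integral>\<omega>. f (X \<omega>, Y \<omega>) \<partial>M) = integral\<^sup>L (distr M (S \<Otimes>\<^sub>M T) (\<lambda>x. (X x, Y x))) f"
    by (rule integral_distr[symmetric]) (simp_all add: measurable_Pair)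
  also have "\<dots> = (\<integral>s. (\<integral>t. f (s, t) \<partial>distr M T Y) \<partial>distr M S X)"
    unfolding eq[symmetric] by (rule P.integral_fst'[OF intP, symmetric])
  also have "\<dots> = (\<integral>\<omega>. (\<integral>t. f (X \<omega>, t) \<partial>distr M T Y) \<partial>M)"
    using m2 by (intro integral_distr rvX)
  also have "\<dots> = (\<integral>\<omega>. (\<integral>\<omega>'. f (X \<omega>, Y \<omega>') \<partial>M) \<partial>M)"
  proof (rule Bochner_Integration.integral_cong)
    fix \<omega> assume "\<omega> \<in> space M"
    then show "(\<integral>t. f (X \<omega>, t) \<partial>distr M T Y) = (\<integral>\<omega>'. f (X \<omega>, Y \<omega>') \<partial>M)"
      using inner[OF measurable_space[OF rvX]] by simp
  qed simp
  finally show "(\<integral>\<omega>. f (X \<omega>, Y \<omega>) \<partial>M) = (\<integral>\<omega>. (\<integral>\<omega>'. f (X \<omega>, Y \<omega>') \<partial>M) \<partial>M)" .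
  have "integrable (distr M S X) (\<lambda>s. \<integral>t. f (s, t) \<partial>distr M T Y)"
    by (rule P.integrable_fst'[OF intP])
  then have "integrable M (\<lambda>\<omega>. \<integral>t. f (X \<omega>, t) \<partial>distr M T Y)"
    using m2 integrable_distr_eq[OF rvX m2] by simp
  then show "integrable M (\<lambda>\<omega>. (\<integral>\<omega>'. f (X \<omega>, Y \<omega>') \<partial>M))"
  proof (subst Bochner_Integration.integrable_cong[OF refl])
    fix \<omega> assume "\<omega> \<in> space M"
    then show "(\<integral>\<omega>'. f (X \<omega>, Y \<omega>') \<partial>M) = (\<integral>t. f (X \<omega>, t) \<partial>distr M T Y)"
      using inner[OF measurable_space[OF rvX]] by simp
  qed
qed



lemma meas_fst_borel[measurable]: "(fst :: real \<times> real \<Rightarrow> real) \<in> borel_measurable borel"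
  by (intro borel_measurable_continuous_onI continuous_intros)
lemma meas_snd_borel[measurable]: "(snd :: real \<times> real \<Rightarrow> real) \<in> borel_measurable borel"
  by (intro borel_measurable_continuous_onI continuous_intros)

lemma rru_cong:
  assumes "\<And>j. 1 \<le> j \<Longrightarrow> j \<le> n \<Longrightarrow> u j = u' j \<and> rx j = rx' j \<and> ry j = ry' j"
  shows "rru x y u rx ry n = rru x y u' rx' ry' n"
  using assms
proof (induction n)
  case (Suc n)
  have "rru x y u rx ry n = rru x y u' rx' ry' n" using Suc by auto
  moreover have "u (Suc n) = u' (Suc n) \<and> rx (Suc n) = rx' (Suc n) \<and> ry (Suc n) = ry' (Suc n)"
    using Suc.prems by auto
  ultimately show ?case by (simp add: Let_def)
qed simp

lemma rru_ind_cong: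
  assumes "\<And>j. 1 \<le> j \<Longrightarrow> j \<le> n \<Longrightarrow> u j = u' j \<and> rx j = rx' j \<and> ry j = ry' j"
  shows "rru_ind x y u rx ry n = rru_ind x y u' rx' ry' n"
proof (cases n)
  case (Suc m)
  have "rru x y u rx ry m = rru x y u' rx' ry' m" by (rule rru_cong) (use assms Suc in auto)
  moreover have "u (Suc m) = u' (Suc m)" using assms Suc by auto
  ultimately show ?thesis using Suc by (simp add: rru_ind_def)
qed (simp add: rru_ind_def)

lemma rru_Suc_fst: "fst (rru x y u rx ry (Suc n)) = fst (rru x y u rx ry n) + rru_ind x y u rx ry (Suc n) * rx (Suc n)"
  by (simp add: rru_ind_def Let_def)
lemma rru_Suc_snd: "snd (rru x y u rx ry (Suc n)) = snd (rru x y u rx ry n) + (1 - rru_ind x y u rx ry (Suc n)) * ry (Suc n)"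
  by (simp add: rru_ind_def Let_def)

locale rru_setup = prob_space M
  for M :: "'a measure" +
  fixes \<mu> \<nu> :: "real measure" and \<beta> x y :: real and U V W :: "nat \<Rightarrow> 'a \<Rightarrow> real"
  assumes mu: "prob_space \<mu>" "sets \<mu> = sets borel" "measure \<mu> {0..\<beta>} = 1"
      and nu: "prob_space \<nu>" "sets \<nu> = sets borel" "measure \<nu> {0..\<beta>} = 1"
      and means: "(\<integral>k. k \<partial>\<mu>) = (\<integral>k. k \<partial>\<nu>)"
      and xy: "0 \<le> x" "0 \<le> y" "0 < x + y"
      and U_unif: "\<And>n. distr M borel (U n) = uniform_measure lborel {0..1}"
      and V_unif: "\<And>n. distr M borel (V n) = uniform_measure lborel {0..1}"
      and W_unif: "\<And>n. distr M borel (W n) = uniform_measure lborel {0..1}"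
      and indep: "indep_vars (\<lambda>_. borel :: (real \<times> real) measure)
                    (case_sum (\<lambda>n \<omega>. (U n \<omega>, 0)) (\<lambda>n \<omega>. (V n \<omega>, W n \<omega>))) UNIV"
begin

abbreviation "Q1 \<equiv> quantile \<mu>"
abbreviation "Q2 \<equiv> quantile \<nu>"

lemma Q1_meas[measurable]: "Q1 \<in> borel_measurable borel" by (rule quantile_measurable[OF mu])
lemma Q2_meas[measurable]: "Q2 \<in> borel_measurable borel" by (rule quantile_measurable[OF nu])

definition "cs = case_sum (\<lambda>n \<omega>. (U n \<omega>, 0)) (\<lambda>n \<omega>. (V n \<omega>, W n \<omega>))"
definition "In n = Inl ` {..n} \<union> Inr ` {..n::nat}"
definition "Bn n = {Inl (Suc n), Inr (Suc n::nat)}"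
definition "xi n \<omega> = restrict (\<lambda>i. cs i \<omega>) (In n)"
definition "eta n \<omega> = restrict (\<lambda>i. cs i \<omega>) (Bn n)"
definition "SS n = PiM (In n) (\<lambda>_. borel :: (real \<times> real) measure)"
definition "TT n = PiM (Bn n) (\<lambda>_. borel :: (real \<times> real) measure)"
definition "Phi n s = rru x y (\<lambda>j. fst (s (Inl j))) (\<lambda>j. Q1 (fst (s (Inr j)))) (\<lambda>j. Q2 (snd (s (Inr j)))) n"
definition "Xp n \<omega> = fst (rru_path \<mu> \<nu> x y U V W n \<omega>)"
definition "Yp n \<omega> = snd (rru_path \<mu> \<nu> x y U V W n \<omega>)"

lemma cs_meas[measurable]: "cs i \<in> borel_measurable M"
  using indep unfolding indep_vars_def cs_def by auto

lemma U_meas[measurable]: "U j \<in> borel_measurable M"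
  using measurable_compose[OF cs_meas[of "Inl j"] meas_fst_borel] unfolding cs_def by (simp add: o_def)
lemma V_meas[measurable]: "V j \<in> borel_measurable M"
  using measurable_compose[OF cs_meas[of "Inr j"] meas_fst_borel] unfolding cs_def by (simp add: o_def)
lemma W_meas[measurable]: "W j \<in> borel_measurable M"
  using measurable_compose[OF cs_meas[of "Inr j"] meas_snd_borel] unfolding cs_def by (simp add: o_def)

lemma xi_meas[measurable]: "xi n \<in> measurable M (SS n)"
  unfolding xi_def SS_def by measurable
lemma eta_meas[measurable]: "eta n \<in> measurable M (TT n)"
  unfolding eta_def TT_def by measurable

lemma indep_xi_eta: "indep_var (SS n) (xi n) (TT n) (eta n)"
  unfolding SS_def TT_def xi_def eta_def
  by (rule indep_var_restrict[OF indep[folded cs_def]]) (auto simp: In_def Bn_def)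

lemma path_eq: "n \<le> N \<Longrightarrow> rru_path \<mu> \<nu> x y U V W n \<omega> = Phi n (xi N \<omega>)"
  unfolding rru_path_def Phi_def
  by (rule rru_cong) (auto simp: xi_def In_def cs_def)

lemma ind_eq: "n \<le> N \<Longrightarrow> rru_indicator \<mu> \<nu> x y U V W n \<omega> =
   rru_ind x y (\<lambda>j. fst (xi N \<omega> (Inl j))) (\<lambda>j. Q1 (fst (xi N \<omega> (Inr j)))) (\<lambda>j. Q2 (snd (xi N \<omega> (Inr j)))) n"
  unfolding rru_indicator_def
  by (rule rru_ind_cong) (auto simp: xi_def In_def cs_def)

lemma comp_meas[measurable]:
  assumes "j \<le> N"
  shows "(\<lambda>s. s (Inl j)) \<in> measurable (SS N) borel" "(\<lambda>s. s (Inr j)) \<in> measurable (SS N) borel"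
  using assms unfolding SS_def In_def by (auto intro!: measurable_component_singleton)

lemma Phi_meas:
  assumes "n \<le> N"
  shows "(\<lambda>s. fst (Phi n s)) \<in> borel_measurable (SS N) \<and> (\<lambda>s. snd (Phi n s)) \<in> borel_measurable (SS N)"
  using assms
proof (induction n)
  case 0 then show ?case by (simp add: Phi_def)
next
  case (Suc n)
  then have [measurable]: "(\<lambda>s. fst (Phi n s)) \<in> borel_measurable (SS N)" "(\<lambda>s. snd (Phi n s)) \<in> borel_measurable (SS N)"
    by auto
  have [measurable]: "(\<lambda>s. s (Inl (Suc n))) \<in> measurable (SS N) borel" "(\<lambda>s. s (Inr (Suc n))) \<in> measurable (SS N) borel"
    using Suc.prems by (auto intro: comp_meas)
  have e1: "(\<lambda>s. fst (Phi (Suc n) s)) = (\<lambda>s. if fst (s (Inl (Suc n))) \<le> fst (Phi n s) / (fst (Phi n s) + snd (Phi n s))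
      then fst (Phi n s) + Q1 (fst (s (Inr (Suc n)))) else fst (Phi n s))"
    unfolding Phi_def by (simp add: Let_def)
  have e2: "(\<lambda>s. snd (Phi (Suc n) s)) = (\<lambda>s. if fst (s (Inl (Suc n))) \<le> fst (Phi n s) / (fst (Phi n s) + snd (Phi n s))
      then snd (Phi n s) else snd (Phi n s) + Q2 (snd (s (Inr (Suc n)))))"
    unfolding Phi_def by (simp add: Let_def)
  show ?case unfolding e1 e2 by measurable
qed

end


context rru_setup begin

lemma beta_nonneg: "0 \<le> \<beta>"
proof -
  have "{0..\<beta>} \<noteq> {}" using mu(3) by (metis measure_empty zero_neq_one)
  then show ?thesis by auto
qed

lemma int_U: "(f :: real \<Rightarrow> real) \<in> borel_measurable borel \<Longrightarrow> (\<integral>\<omega>. f (U j \<omega>) \<partial>M) = (\<integral>u. f u \<partial>uniform_measure lborel {0..1})"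
  using integral_distr[OF U_meas[of j], of f] U_unif[of j] by simp
lemma int_V: "(f :: real \<Rightarrow> real) \<in> borel_measurable borel \<Longrightarrow> (\<integral>\<omega>. f (V j \<omega>) \<partial>M) = (\<integral>u. f u \<partial>uniform_measure lborel {0..1})"
  using integral_distr[OF V_meas[of j], of f] V_unif[of j] by simp
lemma int_W: "(f :: real \<Rightarrow> real) \<in> borel_measurable borel \<Longrightarrow> (\<integral>\<omega>. f (W j \<omega>) \<partial>M) = (\<integral>u. f u \<partial>uniform_measure lborel {0..1})"
  using integral_distr[OF W_meas[of j], of f] W_unif[of j] by simp

lemma AE_unif_le1: "AE u in uniform_measure lborel {0..1::real}. u \<le> 1"
  by (rule AE_uniform_measureI) auto

lemma AE_V_le1: "AE \<omega> in M. V j \<omega> \<le> 1"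
proof -
  have "AE u in distr M borel (V j). u \<le> 1" unfolding V_unif[of j] by (rule AE_unif_le1)
  then show ?thesis by (subst (asm) AE_distr_iff) auto
qed
lemma AE_W_le1: "AE \<omega> in M. W j \<omega> \<le> 1"
proof -
  have "AE u in distr M borel (W j). u \<le> 1" unfolding W_unif[of j] by (rule AE_unif_le1)
  then show ?thesis by (subst (asm) AE_distr_iff) auto
qed

lemma mean_Q1: "(\<integral>\<omega>. Q1 (V j \<omega>) \<partial>M) = (\<integral>k. k \<partial>\<mu>)"
proof -
  have "(\<integral>\<omega>. Q1 (V j \<omega>) \<partial>M) = (\<integral>u. Q1 u \<partial>uniform_measure lborel {0..1})" by (rule int_V) simp
  also have "\<dots> = (\<integral>k. k \<partial>distr (uniform_measure lborel {0..1}) borel Q1)"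
    by (rule integral_distr[symmetric]) auto
  also have "\<dots> = (\<integral>k. k \<partial>\<mu>)" using quantile_distr[OF mu] by simp
  finally show ?thesis .
qed
lemma mean_Q2: "(\<integral>\<omega>. Q2 (W j \<omega>) \<partial>M) = (\<integral>k. k \<partial>\<mu>)"
proof -
  have "(\<integral>\<omega>. Q2 (W j \<omega>) \<partial>M) = (\<integral>u. Q2 u \<partial>uniform_measure lborel {0..1})" by (rule int_W) simp
  also have "\<dots> = (\<integral>k. k \<partial>distr (uniform_measure lborel {0..1}) borel Q2)"
    by (rule integral_distr[symmetric]) auto
  also have "\<dots> = (\<integral>k. k \<partial>\<nu>)" using quantile_distr[OF nu] by simp
  finally show ?thesis using means by simp
qed

lemma AE_R1: "AE \<omega> in M. 0 \<le> Q1 (V j \<omega>) \<and> Q1 (V j \<omega>) \<le> \<beta>"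
  using AE_V_le1[of j] by eventually_elim (use quantile_bounds[OF mu] in auto)
lemma AE_R2: "AE \<omega> in M. 0 \<le> Q2 (W j \<omega>) \<and> Q2 (W j \<omega>) \<le> \<beta>"
  using AE_W_le1[of j] by eventually_elim (use quantile_bounds[OF nu] in auto)

lemma prob_U_le: assumes "0 \<le> z" "z \<le> 1" shows "(\<integral>\<omega>. indicator {..z} (U j \<omega>) \<partial>M) = (z::real)"
proof -
  have "(\<integral>\<omega>. indicator {..z} (U j \<omega>) \<partial>M) = (\<integral>u. indicator {..z} u \<partial>uniform_measure lborel {0..1::real}::real)"
  proof -
    have m: "(indicator {..z} :: real \<Rightarrow> real) \<in> borel_measurable borel" by simp
    show ?thesis using int_U[OF m, of j] .
  qed
  also have "\<dots> = measure (uniform_measure lborel {0..1::real}) {..z}"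
    by simp
  also have "\<dots> = measure lborel ({0..1} \<inter> {..z})" by (subst measure_uniform_measure) auto
  also have "{0..1} \<inter> {..z} = {0..z}" using assms by auto
  finally show ?thesis using assms by simp
qed

lemma indep_UVW:
  assumes [measurable]: "g \<in> borel_measurable borel" "h \<in> borel_measurable borel"
  shows "indep_var borel (\<lambda>\<omega>. g (U j \<omega>) :: real) borel (\<lambda>\<omega>. h (V j \<omega>, W j \<omega>) :: real)"
proof -
  have i: "indep_var (PiM {Inl j} (\<lambda>_. borel)) (\<lambda>\<omega>. restrict (\<lambda>i. cs i \<omega>) {Inl j})
                     (PiM {Inr j} (\<lambda>_. borel)) (\<lambda>\<omega>. restrict (\<lambda>i. cs i \<omega>) {Inr j})"
    by (rule indep_var_restrict[OF indep[folded cs_def]]) auto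
  have m1: "(\<lambda>s. g (fst (s (Inl j)))) \<in> borel_measurable (PiM {Inl j} (\<lambda>_. borel :: (real \<times> real) measure))"
    by measurable
  have m2: "(\<lambda>s. h (s (Inr j))) \<in> borel_measurable (PiM {Inr j} (\<lambda>_. borel :: (real \<times> real) measure))"
    by measurable
  from indep_var_compose[OF i m1 m2] show ?thesis by (simp add: o_def cs_def)
qed

end


lemma arith_bound:
  fixes z D \<beta> m a b :: real
  assumes z: "0 \<le> z" "z \<le> 1" and D: "0 < D" and b0: "0 \<le> \<beta>" and m: "0 \<le> m"
    and a: "m / (D + \<beta>) \<le> a" "a \<le> m / D" and b: "m / (D + \<beta>) \<le> b" "b \<le> m / D"
  shows "0 \<le> (z * a + (1 - z) * b) / D"
    and "\<bar>z * (1 - z) * (a - b)\<bar> \<le> \<beta> / 4 * ((z * a + (1 - z) * b) / D)"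
proof -
  have q0: "0 \<le> m / (D + \<beta>)" using m D b0 by simp
  have low: "m / (D + \<beta>) \<le> z * a + (1 - z) * b"
  proof -
    have "z * (m / (D + \<beta>)) \<le> z * a" using z a by (intro mult_left_mono) auto
    moreover have "(1 - z) * (m / (D + \<beta>)) \<le> (1 - z) * b" using z b by (intro mult_left_mono) auto
    moreover have "z * (m / (D + \<beta>)) + (1 - z) * (m / (D + \<beta>)) = (z + (1 - z)) * (m / (D + \<beta>))"
      by (rule distrib_right[symmetric])
    moreover have "(z + (1 - z)) * (m / (D + \<beta>)) = m / (D + \<beta>)" by simp
    ultimately show ?thesis by linarith
  qed
  then show "0 \<le> (z * a + (1 - z) * b) / D" using q0 D by simp
  have diff: "\<bar>a - b\<bar> \<le> m / D - m / (D + \<beta>)" using a b by auto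
  have eq: "m / D - m / (D + \<beta>) = \<beta> * (m / (D + \<beta>) / D)" using D b0 by (simp add: field_simps)
  have e1: "(z - 1/2)^2 = z*z - z + 1/4" by (simp add: power2_eq_square algebra_simps)
  have e2: "z * (1 - z) = z - z*z" by (simp add: algebra_simps)
  have zz: "z * (1 - z) \<le> 1 / 4" "0 \<le> z * (1 - z)"
    using e1 e2 zero_le_power2[of "z - 1/2"] z by (linarith, intro mult_nonneg_nonneg, auto)
  have "\<bar>z * (1 - z) * (a - b)\<bar> = z * (1 - z) * \<bar>a - b\<bar>" using zz z by (simp add: abs_mult)
  also have "\<dots> \<le> 1 / 4 * (\<beta> * (m / (D + \<beta>) / D))"
    using diff eq zz by (intro mult_mono) auto
  also have "\<dots> = \<beta> / 4 * (m / (D + \<beta>) / D)" by simp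
  also have "\<dots> \<le> \<beta> / 4 * ((z * a + (1 - z) * b) / D)"
    using low D b0 by (intro mult_left_mono divide_right_mono) auto
  finally show "\<bar>z * (1 - z) * (a - b)\<bar> \<le> \<beta> / 4 * ((z * a + (1 - z) * b) / D)" .
qed

context rru_setup begin

definition "stp n X Y t = (if fst (t (Inl (Suc n))) \<le> X / (X + Y)
   then (X + Q1 (fst (t (Inr (Suc n)))), Y) else (X, Y + Q2 (snd (t (Inr (Suc n))))))"
definition "gam n X Y t = fst (stp n X Y t) / (fst (stp n X Y t) + snd (stp n X Y t)) - X / (X + Y)"
definition "gam2 n X Y t = 1 / (X + Y) - 1 / (fst (stp n X Y t) + snd (stp n X Y t))"
definition "Gam n X Y = (\<integral>\<omega>. gam n X Y (eta n \<omega>) \<partial>M)"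
definition "Gam2 n X Y = (\<integral>\<omega>. gam2 n X Y (eta n \<omega>) \<partial>M)"

lemma eta_Inl: "eta n \<omega> (Inl (Suc n)) = (U (Suc n) \<omega>, 0)"
  by (simp add: eta_def Bn_def cs_def)
lemma eta_Inr: "eta n \<omega> (Inr (Suc n)) = (V (Suc n) \<omega>, W (Suc n) \<omega>)"
  by (simp add: eta_def Bn_def cs_def)

lemma int_bounded:
  assumes "f \<in> borel_measurable M" "AE \<omega> in M. \<bar>f \<omega>\<bar> \<le> (B::real)"
  shows "integrable M f"
  using assms by (intro integrable_const_bound[of _ B]) auto

lemma ratio_bounds:
  fixes R :: "'a \<Rightarrow> real"
  assumes Rm[measurable]: "R \<in> borel_measurable M" and RB: "AE \<omega> in M. 0 \<le> R \<omega> \<and> R \<omega> \<le> \<beta>"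
    and D: "0 < D"
  shows "integrable M (\<lambda>\<omega>. R \<omega> / (D + R \<omega>))"
    and "(\<integral>\<omega>. R \<omega> \<partial>M) / (D + \<beta>) \<le> (\<integral>\<omega>. R \<omega> / (D + R \<omega>) \<partial>M)"
    and "(\<integral>\<omega>. R \<omega> / (D + R \<omega>) \<partial>M) \<le> (\<integral>\<omega>. R \<omega> \<partial>M) / D"
    and "0 \<le> (\<integral>\<omega>. R \<omega> \<partial>M)"
proof -
  have iR: "integrable M R" by (rule int_bounded[of _ \<beta>]) (use RB in auto)
  show iC: "integrable M (\<lambda>\<omega>. R \<omega> / (D + R \<omega>))"
    by (rule int_bounded[of _ 1]) (use RB D in auto)
  show "0 \<le> (\<integral>\<omega>. R \<omega> \<partial>M)" using RB by (intro integral_nonneg_AE) auto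
  have "(\<integral>\<omega>. R \<omega> \<partial>M) / (D + \<beta>) = (\<integral>\<omega>. R \<omega> / (D + \<beta>) \<partial>M)" by simp
  also have "\<dots> \<le> (\<integral>\<omega>. R \<omega> / (D + R \<omega>) \<partial>M)"
  proof (rule integral_mono_AE)
    show "integrable M (\<lambda>\<omega>. R \<omega> / (D + \<beta>))" using iR by simp
    show "AE \<omega> in M. R \<omega> / (D + \<beta>) \<le> R \<omega> / (D + R \<omega>)"
      using RB by eventually_elim (use D in \<open>auto intro!: divide_left_mono\<close>)
  qed (rule iC)
  finally show "(\<integral>\<omega>. R \<omega> \<partial>M) / (D + \<beta>) \<le> (\<integral>\<omega>. R \<omega> / (D + R \<omega>) \<partial>M)" .
  have "(\<integral>\<omega>. R \<omega> / (D + R \<omega>) \<partial>M) \<le> (\<integral>\<omega>. R \<omega> / D \<partial>M)"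
  proof (rule integral_mono_AE)
    show "integrable M (\<lambda>\<omega>. R \<omega> / D)" using iR by simp
    show "AE \<omega> in M. R \<omega> / (D + R \<omega>) \<le> R \<omega> / D"
      using RB by eventually_elim (use D in \<open>auto intro!: divide_left_mono\<close>)
  qed (rule iC)
  also have "\<dots> = (\<integral>\<omega>. R \<omega> \<partial>M) / D" by simp
  finally show "(\<integral>\<omega>. R \<omega> / (D + R \<omega>) \<partial>M) \<le> (\<integral>\<omega>. R \<omega> \<partial>M) / D" .
qed

end


lemma alg1:
  fixes X Y r :: real assumes "0 \<le> r" "0 < X + Y"
  shows "(X + r) / (X + r + Y) - X / (X + Y) = (1 - X / (X + Y)) * (r / (X + Y + r))"
    and "1 / (X + Y) - 1 / (X + r + Y) = r / (X + Y + r) / (X + Y)"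
    and "X / (X + (Y + r)) - X / (X + Y) = - (X / (X + Y) * (r / (X + Y + r)))"
    and "1 / (X + Y) - 1 / (X + (Y + r)) = r / (X + Y + r) / (X + Y)"
proof -
  have p: "0 < X + Y + r" "X + r + Y = X + Y + r" "X + (Y + r) = X + Y + r" using assms by auto
  show "(X + r) / (X + r + Y) - X / (X + Y) = (1 - X / (X + Y)) * (r / (X + Y + r))"
    unfolding p(2) using p(1) assms by (simp add: field_simps)
  show "1 / (X + Y) - 1 / (X + r + Y) = r / (X + Y + r) / (X + Y)"
    unfolding p(2) using p(1) assms by (simp add: field_simps)
  show "X / (X + (Y + r)) - X / (X + Y) = - (X / (X + Y) * (r / (X + Y + r)))"
    unfolding p(3) using p(1) assms by (simp add: field_simps)
  show "1 / (X + Y) - 1 / (X + (Y + r)) = r / (X + Y + r) / (X + Y)"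
    unfolding p(3) using p(1) assms by (simp add: field_simps)
qed

context rru_setup begin

lemma Gam_bound:
  assumes X: "0 \<le> X" "0 \<le> Y" "0 < X + Y"
  shows "0 \<le> Gam2 n X Y" "\<bar>Gam n X Y\<bar> \<le> \<beta> / 4 * Gam2 n X Y"
proof -
  define D where "D = X + Y"
  define z where "z = X / (X + Y)"
  have D0: "0 < D" using X by (simp add: D_def)
  have z01: "0 \<le> z" "z \<le> 1" using X by (auto simp: z_def)
  define R1 where "R1 = (\<lambda>\<omega>. Q1 (V (Suc n) \<omega>))"
  define R2 where "R2 = (\<lambda>\<omega>. Q2 (W (Suc n) \<omega>))"
  define I where "I = (\<lambda>\<omega>. (indicator {..z} (U (Suc n) \<omega>) :: real))"
  define c1 where "c1 = (\<lambda>\<omega>. R1 \<omega> / (D + R1 \<omega>))"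
  define c2 where "c2 = (\<lambda>\<omega>. R2 \<omega> / (D + R2 \<omega>))"
  have mR1[measurable]: "R1 \<in> borel_measurable M" unfolding R1_def by measurable
  have mR2[measurable]: "R2 \<in> borel_measurable M" unfolding R2_def by measurable
  have mI[measurable]: "I \<in> borel_measurable M" unfolding I_def by measurable
  have AR1: "AE \<omega> in M. 0 \<le> R1 \<omega> \<and> R1 \<omega> \<le> \<beta>" unfolding R1_def by (rule AE_R1)
  have AR2: "AE \<omega> in M. 0 \<le> R2 \<omega> \<and> R2 \<omega> \<le> \<beta>" unfolding R2_def by (rule AE_R2)
  note rb1 = ratio_bounds[OF mR1 AR1 D0, folded c1_def]
  note rb2 = ratio_bounds[OF mR2 AR2 D0, folded c2_def]
  have mean1: "(\<integral>\<omega>. R1 \<omega> \<partial>M) = (\<integral>k. k \<partial>\<mu>)" unfolding R1_def by (rule mean_Q1)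
  have mean2: "(\<integral>\<omega>. R2 \<omega> \<partial>M) = (\<integral>k. k \<partial>\<mu>)" unfolding R2_def by (rule mean_Q2)
  have iI: "integrable M I" by (rule int_bounded[of _ 1]) (auto simp: I_def)
  have pI: "(\<integral>\<omega>. I \<omega> \<partial>M) = z" unfolding I_def by (rule prob_U_le[OF z01])
  have ind1: "indep_var borel I borel c1"
    using indep_UVW[of "indicator {..z}" "\<lambda>p. Q1 (fst p) / (D + Q1 (fst p))" "Suc n"]
    by (simp add: I_def c1_def R1_def)
  have ind2: "indep_var borel I borel c2"
    using indep_UVW[of "indicator {..z}" "\<lambda>p. Q2 (snd p) / (D + Q2 (snd p))" "Suc n"]
    by (simp add: I_def c2_def R2_def)
  have e1: "(\<integral>\<omega>. I \<omega> * c1 \<omega> \<partial>M) = z * (\<integral>\<omega>. c1 \<omega> \<partial>M)"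
    using indep_var_lebesgue_integral[OF ind1 iI rb1(1)] pI by simp
  have e2: "(\<integral>\<omega>. I \<omega> * c2 \<omega> \<partial>M) = z * (\<integral>\<omega>. c2 \<omega> \<partial>M)"
    using indep_var_lebesgue_integral[OF ind2 iI rb2(1)] pI by simp
  have i1: "integrable M (\<lambda>\<omega>. I \<omega> * c1 \<omega>)" by (rule indep_var_integrable[OF ind1 iI rb1(1)])
  have i2: "integrable M (\<lambda>\<omega>. I \<omega> * c2 \<omega>)" by (rule indep_var_integrable[OF ind2 iI rb2(1)])
  have pw: "gam n X Y (eta n \<omega>) = (1 - z) * (I \<omega> * c1 \<omega>) - z * c2 \<omega> + z * (I \<omega> * c2 \<omega>) \<and>
      gam2 n X Y (eta n \<omega>) = (I \<omega> * c1 \<omega>) / D + c2 \<omega> / D - (I \<omega> * c2 \<omega>) / D"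
    if "0 \<le> R1 \<omega>" "0 \<le> R2 \<omega>" for \<omega>
  proof (cases "U (Suc n) \<omega> \<le> z")
    case True
    have p: "0 < D + R1 \<omega>" using D0 that by simp
    have I1: "I \<omega> = 1" using True by (simp add: I_def)
    have s: "stp n X Y (eta n \<omega>) = (X + R1 \<omega>, Y)" using True
      by (simp add: stp_def eta_Inl eta_Inr R1_def z_def)
    show ?thesis unfolding gam_def gam2_def s I1
      using alg1(1,2)[OF that(1) X(3)] by (simp add: c1_def z_def D_def)
  next
    case False
    have p: "0 < D + R2 \<omega>" using D0 that by simp
    have I0: "I \<omega> = 0" using False by (simp add: I_def)
    have s: "stp n X Y (eta n \<omega>) = (X, Y + R2 \<omega>)" using False
      by (simp add: stp_def eta_Inl eta_Inr R2_def z_def)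
    show ?thesis unfolding gam_def gam2_def s I0
      using alg1(3,4)[OF that(2) X(3)] by (simp add: c2_def z_def D_def)
  qed
  have G1: "Gam n X Y = (1 - z) * (z * (\<integral>\<omega>. c1 \<omega> \<partial>M)) - z * (\<integral>\<omega>. c2 \<omega> \<partial>M) + z * (z * (\<integral>\<omega>. c2 \<omega> \<partial>M))"
  proof -
    have "Gam n X Y = (\<integral>\<omega>. (1 - z) * (I \<omega> * c1 \<omega>) - z * c2 \<omega> + z * (I \<omega> * c2 \<omega>) \<partial>M)"
      unfolding Gam_def
    proof (rule integral_cong_AE)
      show "(\<lambda>\<omega>. gam n X Y (eta n \<omega>)) \<in> borel_measurable M"
        unfolding gam_def stp_def eta_Inl eta_Inr by measurable
      show "(\<lambda>\<omega>. (1 - z) * (I \<omega> * c1 \<omega>) - z * c2 \<omega> + z * (I \<omega> * c2 \<omega>)) \<in> borel_measurable M"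
        unfolding c1_def c2_def by measurable
      show "AE \<omega> in M. gam n X Y (eta n \<omega>) = (1 - z) * (I \<omega> * c1 \<omega>) - z * c2 \<omega> + z * (I \<omega> * c2 \<omega>)"
        using AR1 AR2 by eventually_elim (use pw in auto)
    qed
    also have "\<dots> = (1 - z) * (\<integral>\<omega>. I \<omega> * c1 \<omega> \<partial>M) - z * (\<integral>\<omega>. c2 \<omega> \<partial>M) + z * (\<integral>\<omega>. I \<omega> * c2 \<omega> \<partial>M)"
      using i1 i2 rb2(1) by simp
    finally show ?thesis using e1 e2 by simp
  qed
  have G2: "Gam2 n X Y = (z * (\<integral>\<omega>. c1 \<omega> \<partial>M)) / D + (\<integral>\<omega>. c2 \<omega> \<partial>M) / D - (z * (\<integral>\<omega>. c2 \<omega> \<partial>M)) / D"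
  proof -
    have "Gam2 n X Y = (\<integral>\<omega>. (I \<omega> * c1 \<omega>) / D + c2 \<omega> / D - (I \<omega> * c2 \<omega>) / D \<partial>M)"
      unfolding Gam2_def
    proof (rule integral_cong_AE)
      show "(\<lambda>\<omega>. gam2 n X Y (eta n \<omega>)) \<in> borel_measurable M"
        unfolding gam2_def stp_def eta_Inl eta_Inr by measurable
      show "(\<lambda>\<omega>. (I \<omega> * c1 \<omega>) / D + c2 \<omega> / D - (I \<omega> * c2 \<omega>) / D) \<in> borel_measurable M"
        unfolding c1_def c2_def by measurable
      show "AE \<omega> in M. gam2 n X Y (eta n \<omega>) = (I \<omega> * c1 \<omega>) / D + c2 \<omega> / D - (I \<omega> * c2 \<omega>) / D"
        using AR1 AR2 by eventually_elim (use pw in auto)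
    qed
    also have "\<dots> = (\<integral>\<omega>. I \<omega> * c1 \<omega> \<partial>M) / D + (\<integral>\<omega>. c2 \<omega> \<partial>M) / D - (\<integral>\<omega>. I \<omega> * c2 \<omega> \<partial>M) / D"
      using i1 i2 rb2(1) by simp
    finally show ?thesis using e1 e2 by simp
  qed
  have G1': "Gam n X Y = z * (1 - z) * ((\<integral>\<omega>. c1 \<omega> \<partial>M) - (\<integral>\<omega>. c2 \<omega> \<partial>M))"
    unfolding G1 by (simp add: algebra_simps)
  have G2': "Gam2 n X Y = (z * (\<integral>\<omega>. c1 \<omega> \<partial>M) + (1 - z) * (\<integral>\<omega>. c2 \<omega> \<partial>M)) / D"
    unfolding G2 by (simp add: algebra_simps add_divide_distrib diff_divide_distrib)
  have ab: "0 \<le> (\<integral>k. k \<partial>\<mu>)" using rb1(4) mean1 by simp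
  note A = arith_bound[OF z01 D0 beta_nonneg ab, of "\<integral>\<omega>. c1 \<omega> \<partial>M" "\<integral>\<omega>. c2 \<omega> \<partial>M"]
  show "0 \<le> Gam2 n X Y" using A rb1 rb2 mean1 mean2 unfolding G2' by simp
  show "\<bar>Gam n X Y\<bar> \<le> \<beta> / 4 * Gam2 n X Y" using A rb1 rb2 mean1 mean2 unfolding G1' G2' by simp
qed

end


context rru_setup begin

definition "Zp n \<omega> = Xp n \<omega> / (Xp n \<omega> + Yp n \<omega>)"

lemma AE_good: "AE \<omega> in M. \<forall>j. V j \<omega> \<le> 1 \<and> W j \<omega> \<le> 1"
  unfolding AE_all_countable using AE_V_le1 AE_W_le1 by (auto intro: eventually_conj)

lemma Xp_Suc: "Xp (Suc k) \<omega> = Xp k \<omega> + rru_indicator \<mu> \<nu> x y U V W (Suc k) \<omega> * Q1 (V (Suc k) \<omega>)"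
  unfolding Xp_def rru_path_def rru_indicator_def by (rule rru_Suc_fst)
lemma Yp_Suc: "Yp (Suc k) \<omega> = Yp k \<omega> + (1 - rru_indicator \<mu> \<nu> x y U V W (Suc k) \<omega>) * Q2 (W (Suc k) \<omega>)"
  unfolding Yp_def rru_path_def rru_indicator_def by (rule rru_Suc_snd)
lemma ind01: "rru_indicator \<mu> \<nu> x y U V W k \<omega> = 0 \<or> rru_indicator \<mu> \<nu> x y U V W k \<omega> = 1"
  unfolding rru_indicator_def rru_ind_def by (auto split: nat.split simp: Let_def)

lemma good_path:
  assumes "\<forall>j. V j \<omega> \<le> 1 \<and> W j \<omega> \<le> 1"
  shows "0 \<le> Xp n \<omega> \<and> 0 \<le> Yp n \<omega> \<and> x + y \<le> Xp n \<omega> + Yp n \<omega>"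
proof (induction n)
  case 0 then show ?case using xy by (simp add: Xp_def Yp_def rru_path_def)
next
  case (Suc n)
  have q: "0 \<le> Q1 (V (Suc n) \<omega>)" "0 \<le> Q2 (W (Suc n) \<omega>)"
    using assms quantile_bounds(1)[OF mu] quantile_bounds(1)[OF nu] by auto
  show ?case using Suc ind01[of "Suc n" \<omega>] q unfolding Xp_Suc Yp_Suc by auto
qed

lemma Zp_bound:
  assumes "\<forall>j. V j \<omega> \<le> 1 \<and> W j \<omega> \<le> 1"
  shows "0 \<le> Zp n \<omega> \<and> Zp n \<omega> \<le> 1"
  using good_path[OF assms, of n] xy by (auto simp: Zp_def divide_le_eq_1)

lemma path_step: "rru_path \<mu> \<nu> x y U V W (Suc n) \<omega> = stp n (Xp n \<omega>) (Yp n \<omega>) (eta n \<omega>)"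
  unfolding stp_def eta_Inl eta_Inr Xp_def Yp_def by (simp add: rru_path_def Let_def)

lemma dZ_gam: "Zp (Suc n) \<omega> - Zp n \<omega> = gam n (Xp n \<omega>) (Yp n \<omega>) (eta n \<omega>)"
  unfolding Zp_def gam_def Xp_def[of "Suc n"] Yp_def[of "Suc n"] path_step ..
lemma dD_gam2: "1 / (Xp n \<omega> + Yp n \<omega>) - 1 / (Xp (Suc n) \<omega> + Yp (Suc n) \<omega>) = gam2 n (Xp n \<omega>) (Yp n \<omega>) (eta n \<omega>)"
  unfolding gam2_def Xp_def[of "Suc n"] Yp_def[of "Suc n"] path_step ..

lemma Xp_xi: "Xp n \<omega> = fst (Phi n (xi n \<omega>))" "Yp n \<omega> = snd (Phi n (xi n \<omega>))"
  unfolding Xp_def Yp_def using path_eq[of n n \<omega>] by auto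

lemma Xp_meas[measurable]: "Xp n \<in> borel_measurable M" "Yp n \<in> borel_measurable M"
proof -
  have [measurable]: "(\<lambda>s. fst (Phi n s)) \<in> borel_measurable (SS n)" "(\<lambda>s. snd (Phi n s)) \<in> borel_measurable (SS n)"
    using Phi_meas[of n n] by auto
  show "Xp n \<in> borel_measurable M" unfolding Xp_xi[abs_def] by measurable
  show "Yp n \<in> borel_measurable M" unfolding Xp_xi[abs_def] by measurable
qed

lemma gam_meas[measurable]:
  "(\<lambda>(s, t). gam n (fst (Phi n s)) (snd (Phi n s)) t) \<in> borel_measurable (SS n \<Otimes>\<^sub>M TT n)"
  "(\<lambda>(s, t). gam2 n (fst (Phi n s)) (snd (Phi n s)) t) \<in> borel_measurable (SS n \<Otimes>\<^sub>M TT n)"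
proof -
  have [measurable]: "(\<lambda>s. fst (Phi n s)) \<in> borel_measurable (SS n)" "(\<lambda>s. snd (Phi n s)) \<in> borel_measurable (SS n)"
    using Phi_meas[of n n] by auto
  have [measurable]: "(\<lambda>t. t (Inl (Suc n))) \<in> measurable (TT n) borel" "(\<lambda>t. t (Inr (Suc n))) \<in> measurable (TT n) borel"
    unfolding TT_def Bn_def by (auto intro!: measurable_component_singleton)
  show "(\<lambda>(s, t). gam n (fst (Phi n s)) (snd (Phi n s)) t) \<in> borel_measurable (SS n \<Otimes>\<^sub>M TT n)"
    unfolding gam_def stp_def by measurable
  show "(\<lambda>(s, t). gam2 n (fst (Phi n s)) (snd (Phi n s)) t) \<in> borel_measurable (SS n \<Otimes>\<^sub>M TT n)"
    unfolding gam2_def stp_def by measurable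
qed

lemma Gam_meas[measurable]:
  "(\<lambda>p. Gam n (fst p) (snd p)) \<in> borel_measurable (borel :: (real \<times> real) measure)"
  "(\<lambda>p. Gam2 n (fst p) (snd p)) \<in> borel_measurable (borel :: (real \<times> real) measure)"
proof -
  have [measurable]: "(\<lambda>t. t (Inl (Suc n))) \<in> measurable (TT n) borel" "(\<lambda>t. t (Inr (Suc n))) \<in> measurable (TT n) borel"
    unfolding TT_def Bn_def by (auto intro!: measurable_component_singleton)
  show "(\<lambda>p. Gam n (fst p) (snd p)) \<in> borel_measurable (borel :: (real \<times> real) measure)"
    unfolding Gam_def
    by (rule borel_measurable_lebesgue_integral) (unfold gam_def stp_def, measurable)
  show "(\<lambda>p. Gam2 n (fst p) (snd p)) \<in> borel_measurable (borel :: (real \<times> real) measure)"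
    unfolding Gam2_def
    by (rule borel_measurable_lebesgue_integral) (unfold gam2_def stp_def, measurable)
qed

end


context rru_setup begin

definition "fsF = {rru_indicator \<mu> \<nu> x y U V W, \<lambda>n \<omega>. Q1 (V n \<omega>), \<lambda>n \<omega>. Q2 (W n \<omega>)}"
definition "gens n = (\<Union>j\<in>{1..n}. \<Union>f\<in>fsF. {f j -` B \<inter> space M | B. B \<in> sets borel})"
definition "FF n = gen_filtration M fsF n"

lemma FF_eq: "FF n = sigma (space M) (gens n)"
  unfolding FF_def gen_filtration_def gens_def ..

lemma gens_Pow: "gens n \<subseteq> Pow (space M)" unfolding gens_def by auto

lemma sets_FF: "sets (FF n) = sigma_sets (space M) (gens n)"
  unfolding FF_eq using gens_Pow by (rule sets_measure_of)
lemma space_FF: "space (FF n) = space M"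
  unfolding FF_eq by (rule space_measure_of_conv)

lemma gen_repr:
  assumes "f \<in> fsF" "1 \<le> j" "j \<le> n"
  shows "\<exists>h \<in> borel_measurable (SS n). \<forall>\<omega>. f j \<omega> = h (xi n \<omega>)"
proof -
  have c[measurable]: "(\<lambda>s. s (Inl j)) \<in> measurable (SS n) borel" "(\<lambda>s. s (Inr j)) \<in> measurable (SS n) borel"
    using assms(3) by (rule comp_meas)+
  have xiR: "xi n \<omega> (Inr j) = (V j \<omega>, W j \<omega>)" for \<omega>
    using assms(3) by (simp add: xi_def In_def cs_def)
  consider "f = rru_indicator \<mu> \<nu> x y U V W" | "f = (\<lambda>n \<omega>. Q1 (V n \<omega>))" | "f = (\<lambda>n \<omega>. Q2 (W n \<omega>))"
    using assms(1) unfolding fsF_def by auto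
  then show ?thesis
  proof cases
    case 1
    obtain m where m: "j = Suc m" using assms(2) by (cases j) auto
    have [measurable]: "(\<lambda>s. fst (Phi m s)) \<in> borel_measurable (SS n)" "(\<lambda>s. snd (Phi m s)) \<in> borel_measurable (SS n)"
      using Phi_meas[of m n] assms m by auto
    let ?h = "\<lambda>s. if fst (s (Inl j)) \<le> fst (Phi m s) / (fst (Phi m s) + snd (Phi m s)) then 1 else (0::real)"
    have "?h \<in> borel_measurable (SS n)" by measurable
    moreover have "f j \<omega> = ?h (xi n \<omega>)" for \<omega>
    proof -
      have "f j \<omega> = rru_ind x y (\<lambda>j. fst (xi n \<omega> (Inl j))) (\<lambda>j. Q1 (fst (xi n \<omega> (Inr j)))) (\<lambda>j. Q2 (snd (xi n \<omega> (Inr j)))) j"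
        unfolding 1 by (rule ind_eq[OF assms(3)])
      also have "\<dots> = ?h (xi n \<omega>)" unfolding m by (simp add: rru_ind_def Phi_def Let_def)
      finally show ?thesis .
    qed
    ultimately show ?thesis by (intro bexI[of _ ?h]) auto
  next
    case 2
    have "(\<lambda>s. Q1 (fst (s (Inr j)))) \<in> borel_measurable (SS n)" by measurable
    then show ?thesis unfolding 2 using xiR by (intro bexI[of _ "\<lambda>s. Q1 (fst (s (Inr j)))"]) auto
  next
    case 3
    have "(\<lambda>s. Q2 (snd (s (Inr j)))) \<in> borel_measurable (SS n)" by measurable
    then show ?thesis unfolding 3 using xiR by (intro bexI[of _ "\<lambda>s. Q2 (snd (s (Inr j)))"]) auto
  qed
qed

lemma gens_sub: "gens n \<subseteq> {xi n -` C \<inter> space M | C. C \<in> sets (SS n)}"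
proof
  fix A assume "A \<in> gens n"
  then obtain j f B where jf: "j \<in> {1..n}" "f \<in> fsF" "B \<in> sets borel" and A: "A = f j -` B \<inter> space M"
    unfolding gens_def by blast
  have "1 \<le> j" "j \<le> n" using jf(1) by auto
  then obtain h where h: "h \<in> borel_measurable (SS n)" "\<And>\<omega>. f j \<omega> = h (xi n \<omega>)"
    using gen_repr[OF jf(2)] by blast
  have fj: "f j = (\<lambda>\<omega>. h (xi n \<omega>))" by (rule ext) (rule h(2))
  have "A = xi n -` (h -` B \<inter> space (SS n)) \<inter> space M"
    unfolding A fj using measurable_space[OF xi_meas, of _ n] by blast
  moreover have "h -` B \<inter> space (SS n) \<in> sets (SS n)" using h(1) jf(3) by (rule measurable_sets)
  ultimately show "A \<in> {xi n -` C \<inter> space M | C. C \<in> sets (SS n)}" by blast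
qed

lemma FF_vimage: "sets (FF n) \<subseteq> {xi n -` C \<inter> space M | C. C \<in> sets (SS n)}"
proof -
  have "sets (FF n) \<subseteq> sigma_sets (space M) {xi n -` C \<inter> space M | C. C \<in> sets (SS n)}"
    unfolding sets_FF by (rule sigma_sets_subseteq[OF gens_sub])
  also have "\<dots> = sets (vimage_algebra (space M) (xi n) (SS n))" by (rule sets_vimage_algebra[symmetric])
  also have "\<dots> = {xi n -` C \<inter> space M | C. C \<in> sets (SS n)}"
    by (rule sets_vimage_algebra2) (use measurable_space[OF xi_meas] in auto)
  finally show ?thesis .
qed

lemma subalg_FF: "subalgebra M (FF n)"
  unfolding subalgebra_def space_FF
  using FF_vimage[of n] measurable_sets[OF xi_meas] by blast

lemma FF_mono: "sets (FF k) \<subseteq> sets (FF (Suc k))"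
  unfolding sets_FF gens_def by (rule sigma_sets_subseteq, rule UN_mono) auto

lemma meas_FF_mono: "f \<in> borel_measurable (FF k) \<Longrightarrow> f \<in> borel_measurable (FF (Suc k))"
  using FF_mono[of k] unfolding measurable_def space_FF by auto

lemma gen_meas:
  assumes "f \<in> fsF" "1 \<le> j" "j \<le> n"
  shows "f j \<in> borel_measurable (FF n)"
proof (rule measurableI)
  fix B :: "real set" assume "B \<in> sets borel"
  then have "f j -` B \<inter> space M \<in> gens n" unfolding gens_def using assms
    by (intro UN_I[of j] UN_I[of f]) auto
  then show "f j -` B \<inter> space (FF n) \<in> sets (FF n)" unfolding sets_FF space_FF by auto
qed simp

lemma XY_FF: "k \<le> n \<Longrightarrow> Xp k \<in> borel_measurable (FF n) \<and> Yp k \<in> borel_measurable (FF n)"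
proof (induction k)
  case 0
  have "Xp 0 = (\<lambda>_. x)" "Yp 0 = (\<lambda>_. y)" by (auto simp: Xp_def Yp_def rru_path_def fun_eq_iff)
  then show ?case by simp
next
  case (Suc k)
  then have [measurable]: "Xp k \<in> borel_measurable (FF n)" "Yp k \<in> borel_measurable (FF n)" by auto
  have [measurable]: "rru_indicator \<mu> \<nu> x y U V W (Suc k) \<in> borel_measurable (FF n)"
    by (rule gen_meas) (use Suc.prems in \<open>auto simp: fsF_def\<close>)
  have [measurable]: "(\<lambda>\<omega>. Q1 (V (Suc k) \<omega>)) \<in> borel_measurable (FF n)"
    using gen_meas[of "\<lambda>n \<omega>. Q1 (V n \<omega>)" "Suc k" n] Suc.prems by (auto simp: fsF_def)
  have [measurable]: "(\<lambda>\<omega>. Q2 (W (Suc k) \<omega>)) \<in> borel_measurable (FF n)"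
    using gen_meas[of "\<lambda>n \<omega>. Q2 (W n \<omega>)" "Suc k" n] Suc.prems by (auto simp: fsF_def)
  show ?case unfolding Xp_Suc[abs_def] Yp_Suc[abs_def] by measurable
qed

end


context rru_setup begin

lemma Zp_meas[measurable]: "Zp n \<in> borel_measurable M"
  unfolding Zp_def[abs_def] by measurable

lemma D_bounds:
  assumes "\<forall>j. V j \<omega> \<le> 1 \<and> W j \<omega> \<le> 1"
  shows "0 < 1 / (Xp n \<omega> + Yp n \<omega>) \<and> 1 / (Xp n \<omega> + Yp n \<omega>) \<le> 1 / (x + y)"
  using good_path[OF assms, of n] xy by (auto simp: frac_le)

lemma invD_int: "integrable M (\<lambda>\<omega>. 1 / (Xp n \<omega> + Yp n \<omega>))"
  by (rule int_bounded[of _ "1 / (x + y)"]) (use AE_good in \<open>auto elim!: eventually_mono dest: D_bounds[of _ n]\<close>)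

lemma step_identity:
  assumes C[measurable]: "C \<in> sets (SS n)"
  shows "(\<integral>\<omega>. indicator (xi n -` C \<inter> space M) \<omega> * (Zp (Suc n) \<omega> - Zp n \<omega>) \<partial>M) =
         (\<integral>\<omega>. indicator (xi n -` C \<inter> space M) \<omega> * Gam n (Xp n \<omega>) (Yp n \<omega>) \<partial>M)"
    and "integrable M (\<lambda>\<omega>. indicator (xi n -` C \<inter> space M) \<omega> * Gam n (Xp n \<omega>) (Yp n \<omega>))"
proof -
  let ?B = "xi n -` C \<inter> space M"
  have Bm[measurable]: "?B \<in> sets M" using measurable_sets[OF xi_meas C] .
  define f where "f = (\<lambda>p. indicator C (fst p) * gam n (fst (Phi n (fst p))) (snd (Phi n (fst p))) (snd p) :: real)"
  have i1: "(\<lambda>p. indicator C (fst p) :: real) \<in> borel_measurable (SS n \<Otimes>\<^sub>M TT n)" by measurable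
  have "(\<lambda>p. gam n (fst (Phi n (fst p))) (snd (Phi n (fst p))) (snd p)) \<in> borel_measurable (SS n \<Otimes>\<^sub>M TT n)"
    using gam_meas(1)[of n] by (simp add: split_beta')
  then have fm: "f \<in> borel_measurable (SS n \<Otimes>\<^sub>M TT n)"
    unfolding f_def using i1 by (rule borel_measurable_times[rotated])
  have pw: "f (xi n \<omega>, eta n \<omega>) = indicator ?B \<omega> * (Zp (Suc n) \<omega> - Zp n \<omega>)" if "\<omega> \<in> space M" for \<omega>
    using that by (simp add: f_def dZ_gam Xp_xi indicator_def)
  have int0: "integrable M (\<lambda>\<omega>. indicator ?B \<omega> * (Zp (Suc n) \<omega> - Zp n \<omega>))"
  proof (rule int_bounded[of _ 1])
    show "AE \<omega> in M. \<bar>indicator ?B \<omega> * (Zp (Suc n) \<omega> - Zp n \<omega>)\<bar> \<le> 1"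
      using AE_good
    proof eventually_elim
      case (elim \<omega>)
      then show ?case using Zp_bound[OF elim, of n] Zp_bound[OF elim, of "Suc n"]
        by (auto simp: indicator_def abs_le_iff)
    qed
  qed measurable
  have int: "integrable M (\<lambda>\<omega>. f (xi n \<omega>, eta n \<omega>))"
    using int0 by (subst Bochner_Integration.integrable_cong[OF refl pw]) auto
  have inner: "(\<integral>\<omega>'. f (xi n \<omega>, eta n \<omega>') \<partial>M) = indicator ?B \<omega> * Gam n (Xp n \<omega>) (Yp n \<omega>)"
    if "\<omega> \<in> space M" for \<omega>
    using that by (simp add: f_def Gam_def Xp_xi indicator_def)
  note F = indep_fubini[OF indep_xi_eta fm int]
  have "(\<integral>\<omega>. indicator ?B \<omega> * (Zp (Suc n) \<omega> - Zp n \<omega>) \<partial>M) = (\<integral>\<omega>. f (xi n \<omega>, eta n \<omega>) \<partial>M)"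
    by (rule Bochner_Integration.integral_cong[OF refl pw[symmetric]])
  also have "\<dots> = (\<integral>\<omega>. (\<integral>\<omega>'. f (xi n \<omega>, eta n \<omega>') \<partial>M) \<partial>M)" by (rule F(1))
  also have "\<dots> = (\<integral>\<omega>. indicator ?B \<omega> * Gam n (Xp n \<omega>) (Yp n \<omega>) \<partial>M)"
    by (rule Bochner_Integration.integral_cong[OF refl inner])
  finally show "(\<integral>\<omega>. indicator ?B \<omega> * (Zp (Suc n) \<omega> - Zp n \<omega>) \<partial>M) =
         (\<integral>\<omega>. indicator ?B \<omega> * Gam n (Xp n \<omega>) (Yp n \<omega>) \<partial>M)" .
  show "integrable M (\<lambda>\<omega>. indicator ?B \<omega> * Gam n (Xp n \<omega>) (Yp n \<omega>))"
    using F(2) by (subst (asm) Bochner_Integration.integrable_cong[OF refl inner]) auto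
qed

lemma Gam_int: "integrable M (\<lambda>\<omega>. Gam n (Xp n \<omega>) (Yp n \<omega>))"
proof -
  have "integrable M (\<lambda>\<omega>. indicator (xi n -` space (SS n) \<inter> space M) \<omega> * Gam n (Xp n \<omega>) (Yp n \<omega>))"
    by (rule step_identity(2)) simp
  moreover have "indicator (xi n -` space (SS n) \<inter> space M) \<omega> = (1::real)" if "\<omega> \<in> space M" for \<omega>
    using that measurable_space[OF xi_meas that] by simp
  ultimately show ?thesis by (subst (asm) Bochner_Integration.integrable_cong[OF refl]) auto
qed

lemma tele:
  shows "(\<integral>\<omega>. Gam2 n (Xp n \<omega>) (Yp n \<omega>) \<partial>M) =
         (\<integral>\<omega>. 1 / (Xp n \<omega> + Yp n \<omega>) \<partial>M) - (\<integral>\<omega>. 1 / (Xp (Suc n) \<omega> + Yp (Suc n) \<omega>) \<partial>M)"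
    and "integrable M (\<lambda>\<omega>. Gam2 n (Xp n \<omega>) (Yp n \<omega>))"
proof -
  define f where "f = (\<lambda>p. gam2 n (fst (Phi n (fst p))) (snd (Phi n (fst p))) (snd p) :: real)"
  have fm: "f \<in> borel_measurable (SS n \<Otimes>\<^sub>M TT n)"
    using gam_meas(2)[of n] by (simp add: split_beta' f_def)
  have pw: "f (xi n \<omega>, eta n \<omega>) = 1 / (Xp n \<omega> + Yp n \<omega>) - 1 / (Xp (Suc n) \<omega> + Yp (Suc n) \<omega>)" for \<omega>
    unfolding dD_gam2 by (simp add: f_def Xp_xi[of n])
  have int0: "integrable M (\<lambda>\<omega>. 1 / (Xp n \<omega> + Yp n \<omega>) - 1 / (Xp (Suc n) \<omega> + Yp (Suc n) \<omega>))"
    using invD_int[of n] invD_int[of "Suc n"] by simp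
  have int: "integrable M (\<lambda>\<omega>. f (xi n \<omega>, eta n \<omega>))" unfolding pw by (rule int0)
  have inner: "(\<integral>\<omega>'. f (xi n \<omega>, eta n \<omega>') \<partial>M) = Gam2 n (Xp n \<omega>) (Yp n \<omega>)" for \<omega>
    by (simp add: f_def Gam2_def Xp_xi)
  note F = indep_fubini[OF indep_xi_eta fm int]
  show "integrable M (\<lambda>\<omega>. Gam2 n (Xp n \<omega>) (Yp n \<omega>))" using F(2) unfolding inner .
  have "(\<integral>\<omega>. Gam2 n (Xp n \<omega>) (Yp n \<omega>) \<partial>M) = (\<integral>\<omega>. f (xi n \<omega>, eta n \<omega>) \<partial>M)"
    using F(1) unfolding inner by simp
  also have "\<dots> = (\<integral>\<omega>. 1 / (Xp n \<omega> + Yp n \<omega>) - 1 / (Xp (Suc n) \<omega> + Yp (Suc n) \<omega>) \<partial>M)"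
    unfolding pw ..
  also have "\<dots> = (\<integral>\<omega>. 1 / (Xp n \<omega> + Yp n \<omega>) \<partial>M) - (\<integral>\<omega>. 1 / (Xp (Suc n) \<omega> + Yp (Suc n) \<omega>) \<partial>M)"
    by (rule Bochner_Integration.integral_diff[OF invD_int invD_int])
  finally show "(\<integral>\<omega>. Gam2 n (Xp n \<omega>) (Yp n \<omega>) \<partial>M) =
         (\<integral>\<omega>. 1 / (Xp n \<omega> + Yp n \<omega>) \<partial>M) - (\<integral>\<omega>. 1 / (Xp (Suc n) \<omega> + Yp (Suc n) \<omega>) \<partial>M)" .
qed

end


context rru_setup begin

lemma G_FF: "(\<lambda>\<omega>. Gam n (Xp n \<omega>) (Yp n \<omega>)) \<in> borel_measurable (FF n)"
      "(\<lambda>\<omega>. Gam2 n (Xp n \<omega>) (Yp n \<omega>)) \<in> borel_measurable (FF n)"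
proof -
  have [measurable]: "Xp n \<in> borel_measurable (FF n)" "Yp n \<in> borel_measurable (FF n)" using XY_FF[of n n] by auto
  have "(\<lambda>\<omega>. (Xp n \<omega>, Yp n \<omega>)) \<in> measurable (FF n) (borel \<Otimes>\<^sub>M borel)" by measurable
  then have p: "(\<lambda>\<omega>. (Xp n \<omega>, Yp n \<omega>)) \<in> measurable (FF n) borel" unfolding borel_prod .
  show "(\<lambda>\<omega>. Gam n (Xp n \<omega>) (Yp n \<omega>)) \<in> borel_measurable (FF n)"
    using measurable_compose[OF p Gam_meas(1)[of n]] by (simp add: o_def)
  show "(\<lambda>\<omega>. Gam2 n (Xp n \<omega>) (Yp n \<omega>)) \<in> borel_measurable (FF n)"
    using measurable_compose[OF p Gam_meas(2)[of n]] by (simp add: o_def)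
qed

lemma Gam_FF_M[measurable]: "(\<lambda>\<omega>. Gam n (Xp n \<omega>) (Yp n \<omega>)) \<in> borel_measurable M"
      "(\<lambda>\<omega>. Gam2 n (Xp n \<omega>) (Yp n \<omega>)) \<in> borel_measurable M"
  by (rule measurable_from_subalg[OF subalg_FF G_FF(1)], rule measurable_from_subalg[OF subalg_FF G_FF(2)])

lemma final_bound:
  fixes Mart A :: "nat \<Rightarrow> 'a \<Rightarrow> real"
  assumes Mart: "martingale_wrt M FF Mart"
    and A_pred: "predictable_wrt FF A" "\<And>\<omega>. A 0 \<omega> = 0"
    and doob: "AE \<omega> in M. \<forall>n. Zp n \<omega> = Zp 0 \<omega> + Mart n \<omega> + A n \<omega>"
  shows "(\<integral>\<^sup>+ \<omega>. (SUP r. ennreal \<bar>A r \<omega>\<bar>) \<partial>M) \<le> ennreal (\<beta> / 4 * (1 / (x + y)))"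
proof -
  have A_FF: "A n \<in> borel_measurable (FF n)" for n
  proof (cases n)
    case 0
    have "A 0 = (\<lambda>_. 0)" using A_pred(2) by auto
    then show ?thesis using 0 by simp
  next
    case (Suc k)
    have "A (Suc k) \<in> borel_measurable (FF k)" using A_pred(1) unfolding predictable_wrt_def by blast
    then show ?thesis using Suc meas_FF_mono by simp
  qed
  have A_M[measurable]: "A n \<in> borel_measurable M" for n
    by (rule measurable_from_subalg[OF subalg_FF A_FF])
  have Mart_int: "integrable M (Mart n)" for n using Mart unfolding martingale_wrt_def by auto
  have Mart_M[measurable]: "Mart n \<in> borel_measurable M" for n by (rule borel_measurable_integrable[OF Mart_int])
  have Mart_ce: "AE \<omega> in M. real_cond_exp M (FF n) (Mart (Suc n)) \<omega> = Mart n \<omega>" for n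
    using Mart unfolding martingale_wrt_def by auto
  have dZ_int: "integrable M (\<lambda>\<omega>. Zp (Suc n) \<omega> - Zp n \<omega>)" for n
  proof (rule int_bounded[of _ 1])
    show "AE \<omega> in M. \<bar>Zp (Suc n) \<omega> - Zp n \<omega>\<bar> \<le> 1"
      using AE_good
    proof eventually_elim
      case (elim \<omega>)
      then show ?case using Zp_bound[OF elim, of n] Zp_bound[OF elim, of "Suc n"] by (auto simp: abs_le_iff)
    qed
  qed measurable
  define H where "H n \<omega> = A (Suc n) \<omega> - A n \<omega>" for n \<omega>
  have H_M[measurable]: "H n \<in> borel_measurable M" for n unfolding H_def by measurable
  have H_FF: "H n \<in> borel_measurable (FF n)" for n
  proof -
    have [measurable]: "A (Suc n) \<in> borel_measurable (FF n)" "A n \<in> borel_measurable (FF n)"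
      using A_pred(1) A_FF unfolding predictable_wrt_def by auto
    show ?thesis unfolding H_def by measurable
  qed
  have H_eq: "AE \<omega> in M. H n \<omega> = (Zp (Suc n) \<omega> - Zp n \<omega>) - (Mart (Suc n) \<omega> - Mart n \<omega>)" for n
    using doob
  proof eventually_elim
    case (elim \<omega>)
    have a: "Zp (Suc n) \<omega> = Zp 0 \<omega> + Mart (Suc n) \<omega> + A (Suc n) \<omega>" using elim by blast
    have b: "Zp n \<omega> = Zp 0 \<omega> + Mart n \<omega> + A n \<omega>" using elim by blast
    show ?case unfolding H_def using a b by linarith
  qed
  have H_int: "integrable M (H n)" for n
  proof -
    have "integrable M (\<lambda>\<omega>. (Zp (Suc n) \<omega> - Zp n \<omega>) - (Mart (Suc n) \<omega> - Mart n \<omega>))"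
      by (rule Bochner_Integration.integrable_diff[OF dZ_int Bochner_Integration.integrable_diff[OF Mart_int Mart_int]])
    then show ?thesis using integrable_cong_AE[OF H_M _ H_eq[of n]] by simp
  qed
  have H_G: "AE \<omega> in M. H n \<omega> = Gam n (Xp n \<omega>) (Yp n \<omega>)" for n
  proof -
    interpret S: finite_measure_subalgebra M "FF n"
      by unfold_locales (rule subalg_FF)
    have setint: "(\<integral>\<omega>\<in>B. H n \<omega> \<partial>M) = (\<integral>\<omega>\<in>B. Gam n (Xp n \<omega>) (Yp n \<omega>) \<partial>M)"
      if B: "B \<in> sets (FF n)" for B
    proof -
      have BM[measurable]: "B \<in> sets M" using B subalg_FF[of n] unfolding subalgebra_def by auto
      obtain C where C: "C \<in> sets (SS n)" "B = xi n -` C \<inter> space M" using FF_vimage[of n] B by blast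
      have m1: "(\<integral>\<omega>\<in>B. Mart (Suc n) \<omega> \<partial>M) = (\<integral>\<omega>\<in>B. Mart n \<omega> \<partial>M)"
      proof -
        have "(\<integral>\<omega>\<in>B. Mart (Suc n) \<omega> \<partial>M) = (\<integral>\<omega>\<in>B. real_cond_exp M (FF n) (Mart (Suc n)) \<omega> \<partial>M)"
          by (rule S.real_cond_exp_intA[OF Mart_int B])
        also have "\<dots> = (\<integral>\<omega>\<in>B. Mart n \<omega> \<partial>M)"
          unfolding set_lebesgue_integral_def
          apply (rule integral_cong_AE)
            apply (rule borel_measurable_scaleR, rule borel_measurable_indicator[OF BM], rule borel_measurable_cond_exp2)
           apply measurable
          using Mart_ce[of n] by (auto elim!: eventually_mono)
        finally show ?thesis .
      qed
      have "(\<integral>\<omega>\<in>B. H n \<omega> \<partial>M) = (\<integral>\<omega>. indicator B \<omega> * ((Zp (Suc n) \<omega> - Zp n \<omega>) - (Mart (Suc n) \<omega> - Mart n \<omega>)) \<partial>M)"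
        unfolding set_lebesgue_integral_def
        apply (rule integral_cong_AE)
          apply measurable
        using H_eq[of n] by (auto elim!: eventually_mono)
      also have "\<dots> = (\<integral>\<omega>. indicator B \<omega> * (Zp (Suc n) \<omega> - Zp n \<omega>) \<partial>M)
           - ((\<integral>\<omega>. indicator B \<omega> * Mart (Suc n) \<omega> \<partial>M) - (\<integral>\<omega>. indicator B \<omega> * Mart n \<omega> \<partial>M))"
      proof -
        have i1: "integrable M (\<lambda>\<omega>. indicator B \<omega> * (Zp (Suc n) \<omega> - Zp n \<omega>))"
          using integrable_mult_indicator[OF BM dZ_int[of n]] by simp
        have i2: "integrable M (\<lambda>\<omega>. indicator B \<omega> * Mart k \<omega>)" for k
          using integrable_mult_indicator[OF BM Mart_int[of k]] by simp
        have fe: "(\<lambda>\<omega>. indicator B \<omega> * ((Zp (Suc n) \<omega> - Zp n \<omega>) - (Mart (Suc n) \<omega> - Mart n \<omega>))) =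
           (\<lambda>\<omega>. indicator B \<omega> * (Zp (Suc n) \<omega> - Zp n \<omega>) - (indicator B \<omega> * Mart (Suc n) \<omega> - indicator B \<omega> * Mart n \<omega>))"
          by (simp add: fun_eq_iff algebra_simps)
        show ?thesis unfolding fe
          by (simp only: Bochner_Integration.integral_diff[OF i1 Bochner_Integration.integrable_diff[OF i2 i2]]
                Bochner_Integration.integral_diff[OF i2 i2])
      qed
      also have "(\<integral>\<omega>. indicator B \<omega> * Mart (Suc n) \<omega> \<partial>M) - (\<integral>\<omega>. indicator B \<omega> * Mart n \<omega> \<partial>M) = 0"
        using m1 unfolding set_lebesgue_integral_def by simp
      also have "(\<integral>\<omega>. indicator B \<omega> * (Zp (Suc n) \<omega> - Zp n \<omega>) \<partial>M) =
          (\<integral>\<omega>. indicator B \<omega> * Gam n (Xp n \<omega>) (Yp n \<omega>) \<partial>M)"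
        unfolding C(2) by (rule step_identity(1)[OF C(1)])
      finally show ?thesis unfolding set_lebesgue_integral_def by simp
    qed
    have c1: "AE \<omega> in M. real_cond_exp M (FF n) (H n) \<omega> = Gam n (Xp n \<omega>) (Yp n \<omega>)"
      by (rule S.real_cond_exp_charact[OF setint H_int Gam_int G_FF(1)])
    have c2: "AE \<omega> in M. real_cond_exp M (FF n) (H n) \<omega> = H n \<omega>"
      by (rule S.real_cond_exp_F_meas[OF H_int H_FF])
    show ?thesis using c1 c2 by eventually_elim simp
  qed
  define e where "e n = (\<integral>\<omega>. 1 / (Xp n \<omega> + Yp n \<omega>) \<partial>M)" for n
  have Gam2_nn: "AE \<omega> in M. 0 \<le> Gam2 n (Xp n \<omega>) (Yp n \<omega>)" for n
    using AE_good
  proof eventually_elim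
    case (elim \<omega>)
    have "0 \<le> Xp n \<omega>" "0 \<le> Yp n \<omega>" "0 < Xp n \<omega> + Yp n \<omega>" using good_path[OF elim, of n] xy by auto
    then show ?case by (rule Gam_bound(1))
  qed
  have H_bd: "AE \<omega> in M. \<bar>H n \<omega>\<bar> \<le> \<beta> / 4 * Gam2 n (Xp n \<omega>) (Yp n \<omega>)" for n
    using AE_good H_G[of n]
  proof eventually_elim
    case (elim \<omega>)
    have "0 \<le> Xp n \<omega>" "0 \<le> Yp n \<omega>" "0 < Xp n \<omega> + Yp n \<omega>" using good_path[OF elim(1), of n] xy by auto
    then show ?case using Gam_bound(2) elim(2) by simp
  qed
  have e_diff: "e n - e (Suc n) = (\<integral>\<omega>. Gam2 n (Xp n \<omega>) (Yp n \<omega>) \<partial>M)" for n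
    unfolding e_def using tele(1) by simp
  have e_mono: "0 \<le> e n - e (Suc n)" for n
    unfolding e_diff by (rule integral_nonneg_AE[OF Gam2_nn])
  have e_nn: "0 \<le> e n" for n unfolding e_def
    by (rule integral_nonneg_AE) (use AE_good in \<open>auto elim!: eventually_mono dest: D_bounds[of _ n]\<close>)
  have e0: "e 0 = 1 / (x + y)" by (simp add: e_def Xp_def Yp_def rru_path_def prob_space)
  have step: "(\<integral>\<^sup>+\<omega>. ennreal \<bar>H n \<omega>\<bar> \<partial>M) \<le> ennreal (\<beta> / 4 * (e n - e (Suc n)))" for n
  proof -
    have "(\<integral>\<^sup>+\<omega>. ennreal \<bar>H n \<omega>\<bar> \<partial>M) \<le> (\<integral>\<^sup>+\<omega>. ennreal (\<beta> / 4 * Gam2 n (Xp n \<omega>) (Yp n \<omega>)) \<partial>M)"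
      by (rule nn_integral_mono_AE) (use H_bd[of n] in \<open>auto elim!: eventually_mono intro: ennreal_leI\<close>)
    also have "\<dots> = ennreal (\<integral>\<omega>. \<beta> / 4 * Gam2 n (Xp n \<omega>) (Yp n \<omega>) \<partial>M)"
    proof (rule nn_integral_eq_integral)
      show "integrable M (\<lambda>\<omega>. \<beta> / 4 * Gam2 n (Xp n \<omega>) (Yp n \<omega>))" using tele(2)[of n] by simp
      show "AE \<omega> in M. 0 \<le> \<beta> / 4 * Gam2 n (Xp n \<omega>) (Yp n \<omega>)"
        using Gam2_nn[of n] by eventually_elim (use beta_nonneg in simp)
    qed
    also have "\<dots> = ennreal (\<beta> / 4 * (e n - e (Suc n)))" using e_diff[of n] by simp
    finally show ?thesis .
  qed
  have sumA: "\<bar>A r \<omega>\<bar> \<le> (\<Sum>n<r. \<bar>H n \<omega>\<bar>)" for r \<omega>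
  proof (induction r)
    case 0 then show ?case using A_pred(2) by simp
  next
    case (Suc r)
    have "A (Suc r) \<omega> = A r \<omega> + H r \<omega>" by (simp add: H_def)
    then show ?case using Suc by simp
  qed
  have pw: "(SUP r. ennreal \<bar>A r \<omega>\<bar>) \<le> (\<Sum>n. ennreal \<bar>H n \<omega>\<bar>)" for \<omega>
  proof (rule SUP_least)
    fix r
    have "ennreal \<bar>A r \<omega>\<bar> \<le> ennreal (\<Sum>n<r. \<bar>H n \<omega>\<bar>)" using sumA by (rule ennreal_leI)
    also have "\<dots> = (\<Sum>n<r. ennreal \<bar>H n \<omega>\<bar>)" by simp
    also have "\<dots> \<le> (\<Sum>n. ennreal \<bar>H n \<omega>\<bar>)" by (rule sum_le_suminf) auto
    finally show "ennreal \<bar>A r \<omega>\<bar> \<le> (\<Sum>n. ennreal \<bar>H n \<omega>\<bar>)" .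
  qed
  have "(\<integral>\<^sup>+ \<omega>. (SUP r. ennreal \<bar>A r \<omega>\<bar>) \<partial>M) \<le> (\<integral>\<^sup>+ \<omega>. (\<Sum>n. ennreal \<bar>H n \<omega>\<bar>) \<partial>M)"
    by (rule nn_integral_mono) (rule pw)
  also have "\<dots> = (\<Sum>n. (\<integral>\<^sup>+\<omega>. ennreal \<bar>H n \<omega>\<bar> \<partial>M))"
    by (rule nn_integral_suminf) measurable
  also have "\<dots> \<le> (\<Sum>n. ennreal (\<beta> / 4 * (e n - e (Suc n))))"
    by (rule suminf_le) (use step in auto)
  also have "\<dots> \<le> ennreal (\<beta> / 4 * e 0)"
  proof (rule suminf_le_const)
    fix N
    have "(\<Sum>n<N. ennreal (\<beta> / 4 * (e n - e (Suc n)))) = ennreal (\<Sum>n<N. \<beta> / 4 * (e n - e (Suc n)))"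
      using e_mono beta_nonneg by (intro sum_ennreal) simp
    also have "(\<Sum>n<N. \<beta> / 4 * (e n - e (Suc n))) = \<beta> / 4 * (e 0 - e N)"
    proof -
      have t: "(\<Sum>n<N. e n - e (Suc n)) = e 0 - e N"
        using sum_lessThan_telescope[of "\<lambda>n. - e n" N] by simp
      have "(\<Sum>n<N. \<beta> / 4 * (e n - e (Suc n))) = \<beta> / 4 * (\<Sum>n<N. e n - e (Suc n))"
        by (rule sum_distrib_left[symmetric])
      then show ?thesis unfolding t .
    qed
    also have "ennreal (\<beta> / 4 * (e 0 - e N)) \<le> ennreal (\<beta> / 4 * e 0)"
      using e_nn[of N] beta_nonneg by (intro ennreal_leI mult_left_mono) auto
    finally show "(\<Sum>n<N. ennreal (\<beta> / 4 * (e n - e (Suc n)))) \<le> ennreal (\<beta> / 4 * e 0)" .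
  qed auto
  finally show ?thesis using e0 by simp
qed

end

theorem lemmaA2:
  fixes m0 \<beta> :: real and \<mu> \<nu> :: "real measure" and x y :: real
    and M :: "'a measure" and U V W :: "nat \<Rightarrow> 'a \<Rightarrow> real"
    and Mart A :: "nat \<Rightarrow> 'a \<Rightarrow> real"
  defines "Z \<equiv> \<lambda>n \<omega>. fst (rru_path \<mu> \<nu> x y U V W n \<omega>) /
                       (fst (rru_path \<mu> \<nu> x y U V W n \<omega>) + snd (rru_path \<mu> \<nu> x y U V W n \<omega>))"
      and "\<A> \<equiv> gen_filtration M {rru_indicator \<mu> \<nu> x y U V W,
                                 \<lambda>n \<omega>. quantile \<mu> (V n \<omega>), \<lambda>n \<omega>. quantile \<nu> (W n \<omega>)}"
  assumes m0: "0 < m0" "m0 \<le> \<beta>"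
      and P: "pair_class m0 \<beta> \<mu> \<nu>"
      and S: "x \<ge> 0" "y \<ge> 0" "(x, y) \<noteq> (0, 0)"
      and prob: "prob_space M"
      and U_unif: "\<And>n. distr M borel (U n) = uniform_measure lborel {0..1}"
      and VW_ident: "\<And>n. distr M borel (\<lambda>\<omega>. (V n \<omega>, W n \<omega>)) = distr M borel (\<lambda>\<omega>. (V 0 \<omega>, W 0 \<omega>))"
      and V_unif: "\<And>n. distr M borel (V n) = uniform_measure lborel {0..1}"
      and W_unif: "\<And>n. distr M borel (W n) = uniform_measure lborel {0..1}"
      and indep: "prob_space.indep_vars M (\<lambda>_. borel :: (real \<times> real) measure)
                    (case_sum (\<lambda>n \<omega>. (U n \<omega>, 0)) (\<lambda>n \<omega>. (V n \<omega>, W n \<omega>))) UNIV"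
      and Mart: "martingale_wrt M \<A> Mart" "\<And>\<omega>. Mart 0 \<omega> = 0"
      and A_pred: "predictable_wrt \<A> A" "\<And>\<omega>. A 0 \<omega> = 0"
      and doob: "AE \<omega> in M. \<forall>n. Z n \<omega> = Z 0 \<omega> + Mart n \<omega> + A n \<omega>"
      and D0: "x + y \<ge> 2 * \<beta>"
  shows "(\<integral>\<^sup>+ \<omega>. (SUP r. ennreal \<bar>A r \<omega>\<bar>) \<partial>M) \<le> ennreal (\<beta> / (x + y))"
proof -
  have PC: "prob_space \<mu>" "sets \<mu> = sets borel" "measure \<mu> {0..\<beta>} = 1"
       "prob_space \<nu>" "sets \<nu> = sets borel" "measure \<nu> {0..\<beta>} = 1"
       "(\<integral>k. k \<partial>\<mu>) = (\<integral>k. k \<partial>\<nu>)"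
    using P unfolding pair_class_def by auto
  have xy0: "0 < x + y" using D0 m0 by linarith
  have RS: "rru_setup M \<mu> \<nu> \<beta> x y U V W"
    unfolding rru_setup_def rru_setup_axioms_def
    using prob PC S(1,2) xy0 U_unif V_unif W_unif indep by blast
  interpret R: rru_setup M \<mu> \<nu> \<beta> x y U V W by (rule RS)
  have ZZ: "Z = R.Zp" unfolding Z_def by (simp add: fun_eq_iff R.Zp_def R.Xp_def R.Yp_def)
  have AA: "\<A> = R.FF" unfolding \<A>_def by (simp add: fun_eq_iff R.FF_def R.fsF_def)
  have "(\<integral>\<^sup>+ \<omega>. (SUP r. ennreal \<bar>A r \<omega>\<bar>) \<partial>M) \<le> ennreal (\<beta> / 4 * (1 / (x + y)))"
  proof -
    have doob': "AE \<omega> in M. \<forall>n. R.Zp n \<omega> = R.Zp 0 \<omega> + Mart n \<omega> + A n \<omega>" using doob unfolding ZZ .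
    have mart': "martingale_wrt M R.FF Mart" using Mart(1) unfolding AA .
    have pred': "predictable_wrt R.FF A" using A_pred(1) unfolding AA .
    show ?thesis by (rule R.final_bound[OF mart' pred' A_pred(2) doob'])
  qed
  also have "\<dots> \<le> ennreal (\<beta> / (x + y))"
  proof (rule ennreal_leI)
    have "\<beta> / 4 * (1 / (x + y)) = \<beta> / (4 * (x + y))" by simp
    also have "\<dots> \<le> \<beta> / (x + y)" using R.beta_nonneg xy0 by (intro frac_le) auto
    finally show "\<beta> / 4 * (1 / (x + y)) \<le> \<beta> / (x + y)" .
  qed
  finally show ?thesis .
qed



end
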